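(* Let $M$ be a real $n\times n$ matrix, $n\ge2$. If $M^{[2]}$ is a $P_0$-matrix, then no nonreal eigenvalue of $M$ lies in the open left half-plane $\mathbb{C}_-$. If $-M^{[2]}$ is a $P_0$-matrix, then no nonreal eigenvalue of $M$ lies in the open right half-plane $\mathbb{C}_+$.
   Context: A square real matrix is a $P_0$-matrix if all its principal minors are nonnegative. For $M\in\mathbb{R}^{n\times n}$, $M^{[2]}$ is the second additive compound: the matrix of $u\wedge v\mapsto Mu\wedge v+u\wedge Mv$ on $\Lambda^2\mathbb{R}^n$ with respect to the basis $e_i\wedge e_j$ ($i<j$) in lexicographic order. *)

theory Defs
  imports "Jordan_Normal_Form.Char_Poly" "Jordan_Normal_Form.DL_Submatrix"
begin

definition P0_matrix :: "real mat \<Rightarrow> bool" where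
  "P0_matrix A \<longleftrightarrow> dim_row A = dim_col A \<and>
     (\<forall>I. I \<subseteq> {0..<dim_row A} \<longrightarrow> I \<noteq> {} \<longrightarrow> det (submatrix A I I) \<ge> 0)"

definition pairs2 :: "nat \<Rightarrow> (nat \<times> nat) list" where
  "pairs2 n = concat (map (\<lambda>i. map (\<lambda>j. (i, j)) [Suc i..<n]) [0..<n])"

text \<open>Coefficient of e_i wedge e_j (i<j) in M e_q wedge e_r + e_q wedge M e_r.\<close>
definition compound2_entry :: "real mat \<Rightarrow> nat \<times> nat \<Rightarrow> nat \<times> nat \<Rightarrow> real" where
  "compound2_entry M ij qr = (case ij of (i, j) \<Rightarrow> case qr of (q, r) \<Rightarrow>
      (if r = j then M $$ (i, q) else 0) - (if r = i then M $$ (j, q) else 0)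
    + (if q = i then M $$ (j, r) else 0) - (if q = j then M $$ (i, r) else 0))"

definition compound2 :: "real mat \<Rightarrow> real mat" where
  "compound2 M = (let n = dim_row M; P = pairs2 n in
     mat (length P) (length P) (\<lambda>(k, l). compound2_entry M (P ! k) (P ! l)))"

end

theory Submission
  imports Defs
begin

definition Xm :: "real mat \<Rightarrow> nat \<Rightarrow> (nat\<Rightarrow>nat) \<Rightarrow> (nat\<Rightarrow>real) \<Rightarrow> real mat" where
 "Xm A m f e = mat m m (\<lambda>(i,j). A $$ (f i, f j) + (if i = j then e i else 0))"

definition sh :: "nat \<Rightarrow> nat \<Rightarrow> nat" where "sh k i = (if i < k then i else Suc i)"

definition P0' :: "real mat \<Rightarrow> nat \<Rightarrow> bool" where
 "P0' A n \<longleftrightarrow> (\<forall>m f. 0 < m \<longrightarrow> strict_mono_on {..<m} f \<longrightarrow> f ` {..<m} \<subseteq> {..<n}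
    \<longrightarrow> det (Xm A m f (\<lambda>_. 0)) \<ge> 0)"

lemma Xm_carrier[simp]: "Xm A m f e \<in> carrier_mat m m" by (simp add: Xm_def)

lemma det0: "det (Xm A 0 f e) = 1"
  by (simp add: Xm_def det_def)

lemma mat_delete_Xm: assumes "k < m"
  shows "mat_delete (Xm A m f e) k k = Xm A (m-1) (f \<circ> sh k) (e \<circ> sh k)"
  by (rule eq_matI) (auto simp: mat_delete_def Xm_def sh_def)

lemma Xm_laplace: assumes k: "k < m"
  shows "det (Xm A m f e) = det (Xm A m f (e(k:=0))) + e k * det (Xm A (m-1) (f \<circ> sh k) (e \<circ> sh k))"
proof -
  let ?X = "Xm A m f e" and ?Y = "Xm A m f (e(k:=0))"
  have cof: "cofactor ?X k j = cofactor ?Y k j" if "j < m" for j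
  proof -
      have "mat_delete ?X k j = mat_delete ?Y k j"
      proof (rule eq_matI)
        fix r c assume r: "r < dim_row (mat_delete ?Y k j)" and c: "c < dim_col (mat_delete ?Y k j)"
        define r' where "r' = (if r < k then r else Suc r)"
        define c' where "c' = (if c < j then c else Suc c)"
        have "r' \<noteq> k" unfolding r'_def by auto
        have "r' < m" "c' < m" using r c k that unfolding r'_def c'_def by (auto simp: Xm_def)
        then show "mat_delete ?X k j $$ (r, c) = mat_delete ?Y k j $$ (r, c)"
          using r c \<open>r' \<noteq> k\<close> unfolding mat_delete_def r'_def[symmetric] c'_def[symmetric]
          by (simp add: Xm_def)
      qed (simp_all add: Xm_def)
      then show ?thesis unfolding cofactor_def by simp
    qed
  have ent: "?X $$ (k,j) = ?Y $$ (k,j) + (if j = k then e k else 0)" if "j < m" for j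
    using k that by (auto simp: Xm_def)
  have "det ?X = (\<Sum>j<m. ?X $$ (k,j) * cofactor ?X k j)"
    by (rule laplace_expansion_row[OF Xm_carrier k])
  also have "\<dots> = (\<Sum>j<m. ?Y $$ (k,j) * cofactor ?Y k j) + (\<Sum>j<m. (if j = k then e k else 0) * cofactor ?Y k j)"
    by (simp add: ent cof distrib_right sum.distrib)
  also have "(\<Sum>j<m. ?Y $$ (k,j) * cofactor ?Y k j) = det ?Y"
    by (rule laplace_expansion_row[OF Xm_carrier k, symmetric])
  also have "(\<Sum>j<m. (if j = k then e k else 0) * cofactor ?Y k j) = (\<Sum>j<m. if j = k then e k * cofactor ?Y k j else 0)"
    by (intro sum.cong) auto
  also have "\<dots> = e k * cofactor ?Y k k"
    using k by simp
  also have "cofactor ?Y k k = det (Xm A (m-1) (f \<circ> sh k) (e \<circ> sh k))"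
    using cof[OF k] mat_delete_Xm[OF k] by (simp add: cofactor_def)
  finally show ?thesis .
qed

lemma sm_sh: assumes "strict_mono_on {..<m} f" "k < m"
  shows "strict_mono_on {..<m-1} (f \<circ> sh k)"
proof (rule strict_mono_onI)
  fix r s assume "r \<in> {..<m-1}" "s \<in> {..<m-1}" "r < s"
  then show "(f \<circ> sh k) r < (f \<circ> sh k) s" using assms
    by (auto simp: sh_def intro!: strict_mono_onD[OF assms(1)])
qed

lemma img_sh: assumes "f ` {..<m} \<subseteq> {..<n}" "k < m"
  shows "(f \<circ> sh k) ` {..<m-1} \<subseteq> {..<n}"
  using assms unfolding sh_def by (auto simp: subset_iff)

lemma Xm_cong: assumes "\<And>i. i < m \<Longrightarrow> e i = e' i" shows "Xm A m f e = Xm A m f e'"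
  using assms by (auto simp: Xm_def intro!: eq_matI)

lemma G: assumes "P0' A n"
  shows "strict_mono_on {..<m} f \<Longrightarrow> f ` {..<m} \<subseteq> {..<n} \<Longrightarrow> (\<forall>i. e i \<ge> 0)
   \<Longrightarrow> (\<forall>i. k \<le> i \<longrightarrow> i < m \<longrightarrow> e i = 0) \<Longrightarrow> det (Xm A m f e) \<ge> 0"
proof (induction k arbitrary: m f e)
  case 0
  show ?case
  proof (cases "m = 0")
    case True then show ?thesis by (simp add: det0)
  next
    case False
    have eq: "Xm A m f e = Xm A m f (\<lambda>_. 0)" using 0(4) by (intro Xm_cong) simp
    have "det (Xm A m f (\<lambda>_. 0)) \<ge> 0"
      using assms[unfolded P0'_def, rule_format, of m f] 0(1,2) False by simp
    then show ?thesis unfolding eq .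
  qed
next
  case (Suc k)
  show ?case
  proof (cases "k < m")
    case False
    have z: "\<forall>i. k \<le> i \<longrightarrow> i < m \<longrightarrow> e i = 0" using False by simp
    show ?thesis by (rule Suc.IH[OF Suc.prems(1,2,3) z])
  next
    case True
    have z1: "\<forall>i. k \<le> i \<longrightarrow> i < m \<longrightarrow> (e(k:=0)) i = 0"
    proof (intro allI impI)
      fix i assume "k \<le> i" "i < m"
      then show "(e(k:=0)) i = 0" using Suc.prems(4) by (cases "i = k") simp_all
    qed
    have nn1: "\<forall>i. (e(k:=0)) i \<ge> 0" using Suc.prems(3) by simp
    have a: "det (Xm A m f (e(k:=0))) \<ge> 0" by (rule Suc.IH[OF Suc.prems(1,2) nn1 z1])
    have sm: "strict_mono_on {..<m-1} (f \<circ> sh k)" by (rule sm_sh[OF Suc.prems(1) True])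
    have im: "(f \<circ> sh k) ` {..<m-1} \<subseteq> {..<n}" by (rule img_sh[OF Suc.prems(2) True])
    have nn2: "\<forall>i. (e \<circ> sh k) i \<ge> 0" using Suc.prems(3) by simp
    have z2: "\<forall>i. k \<le> i \<longrightarrow> i < m - 1 \<longrightarrow> (e \<circ> sh k) i = 0"
    proof (intro allI impI)
      fix i assume "k \<le> i" "i < m - 1"
      then have "sh k i = Suc i" "Suc k \<le> Suc i" "Suc i < m" by (auto simp: sh_def)
      then show "(e \<circ> sh k) i = 0" using Suc.prems(4) by simp
    qed
    have b: "det (Xm A (m-1) (f \<circ> sh k) (e \<circ> sh k)) \<ge> 0" by (rule Suc.IH[OF sm im nn2 z2])
    have c: "e k * det (Xm A (m-1) (f \<circ> sh k) (e \<circ> sh k)) \<ge> 0"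
      using b Suc.prems(3) by simp
    show ?thesis using Xm_laplace[OF True, of A f e] a c by simp
  qed
qed

lemma Spos: assumes "P0' A n"
  shows "strict_mono_on {..<m} f \<Longrightarrow> f ` {..<m} \<subseteq> {..<n} \<Longrightarrow> (\<forall>i. e i > 0)
   \<Longrightarrow> det (Xm A m f e) > 0"
proof (induction m arbitrary: f e)
  case 0
  then show ?case by (simp add: det0)
next
  case (Suc m)
  have a: "det (Xm A (Suc m) f (e(0:=0))) \<ge> 0"
    using Suc.prems by (intro G[OF assms, where k = "Suc m"]) (auto simp: less_imp_le)
  have b: "det (Xm A m (f \<circ> sh 0) (e \<circ> sh 0)) > 0"
  proof -
    have sm: "strict_mono_on {..<m} (f \<circ> sh 0)" using sm_sh[OF Suc.prems(1), of 0] by simp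
    have im: "(f \<circ> sh 0) ` {..<m} \<subseteq> {..<n}" using img_sh[OF Suc.prems(2), of 0] by simp
    show ?thesis by (rule Suc.IH[OF sm im]) (use Suc.prems in auto)
  qed
  have c: "e 0 * det (Xm A m (f \<circ> sh 0) (e \<circ> sh 0)) > 0" using b Suc.prems(3) by simp
  show ?case using Xm_laplace[of 0 "Suc m" A f e] a c by simp
qed

lemma half_sum:
  fixes F :: "nat \<Rightarrow> nat \<Rightarrow> real"
  assumes sym: "\<And>q r. F q r = F r q" and diag: "\<And>q. F q q = 0"
  shows "(\<Sum>q<n. \<Sum>r<n. F q r) = 2 * (\<Sum>q<n. \<Sum>r\<in>{Suc q..<n}. F q r)"
proof (induction n)
  case 0 then show ?case by simp
next
  case (Suc n)
  have "(\<Sum>q<Suc n. \<Sum>r<Suc n. F q r) = (\<Sum>q<n. \<Sum>r<n. F q r) + 2 * (\<Sum>q<n. F q n)"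
    by (simp add: sum.distrib sym diag)
  moreover have "(\<Sum>q<Suc n. \<Sum>r\<in>{Suc q..<Suc n}. F q r) = (\<Sum>q<n. \<Sum>r\<in>{Suc q..<n}. F q r) + (\<Sum>q<n. F q n)"
  proof -
    have "(\<Sum>q<Suc n. \<Sum>r\<in>{Suc q..<Suc n}. F q r) = (\<Sum>q<n. \<Sum>r\<in>{Suc q..<Suc n}. F q r)" by simp
    also have "\<dots> = (\<Sum>q<n. (\<Sum>r\<in>{Suc q..<n}. F q r) + F q n)"
      by (intro sum.cong) auto
    finally show ?thesis by (simp add: sum.distrib)
  qed
  ultimately show ?case using Suc.IH by simp
qed

lemma sum_list_concat': "sum_list (concat xss) = sum_list (map sum_list xss)"
  by (induction xss) auto

lemma sum_pairs2: "(\<Sum>l<length (pairs2 n). g (pairs2 n ! l)) = (\<Sum>i<n. \<Sum>j\<in>{Suc i..<n}. g (i,j))"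
proof -
  have "(\<Sum>l<length (pairs2 n). g (pairs2 n ! l)) = sum_list (map g (pairs2 n))"
    by (simp add: sum_list_sum_nth atLeast0LessThan)
  also have "\<dots> = (\<Sum>i<n. \<Sum>j\<in>{Suc i..<n}. g (i,j))"
    unfolding pairs2_def
    by (simp add: map_concat sum_list_concat' o_def sum_set_upt_conv_sum_list_nat[symmetric] atLeast0LessThan)
  finally show ?thesis .
qed

lemma set_pairs2: "set (pairs2 n) = {(i,j). i < j \<and> j < n}"
  by (auto simp: pairs2_def image_iff)

lemma D1: fixes g :: "nat \<Rightarrow> real" assumes "j < n"
  shows "(\<Sum>q<n. \<Sum>r<n. (if r = j then g q else 0) * W q r) = (\<Sum>q<n. g q * W q j)"
proof (intro sum.cong refl)
  fix q
  have "(\<Sum>r<n. (if r = j then g q else 0) * W q r) = (\<Sum>r<n. if r = j then g q * W q r else 0)"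
    by (intro sum.cong) auto
  also have "\<dots> = g q * W q j" using assms by simp
  finally show "(\<Sum>r<n. (if r = j then g q else 0) * W q r) = g q * W q j" .
qed

lemma D2: fixes g :: "nat \<Rightarrow> real" assumes "i < n"
  shows "(\<Sum>q<n. \<Sum>r<n. (if q = i then g r else 0) * W q r) = (\<Sum>r<n. g r * W i r)"
proof -
  have "(\<Sum>q<n. \<Sum>r<n. (if q = i then g r else 0) * W q r) = (\<Sum>q<n. if q = i then (\<Sum>r<n. g r * W q r) else 0)"
    by (intro sum.cong) auto
  also have "\<dots> = (\<Sum>r<n. g r * W i r)" using assms by simp
  finally show ?thesis .
qed

lemma compound_calc:
  fixes M :: "real mat" and x y :: "nat \<Rightarrow> real"
  assumes "i < n" "j < n"
  shows "(\<Sum>q<n. \<Sum>r\<in>{Suc q..<n}. compound2_entry M (i,j) (q,r) * (x q * y r - x r * y q))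
    = (\<Sum>q<n. M$$(i,q)*x q) * y j - x j * (\<Sum>q<n. M$$(i,q)*y q)
      + x i * (\<Sum>q<n. M$$(j,q)*y q) - (\<Sum>q<n. M$$(j,q)*x q) * y i"
proof -
  define W where "W = (\<lambda>q r. x q * y r - x r * y q)"
  let ?F = "\<lambda>q r. compound2_entry M (i,j) (q,r) * W q r"
  have h: "(\<Sum>q<n. \<Sum>r<n. ?F q r) = 2 * (\<Sum>q<n. \<Sum>r\<in>{Suc q..<n}. ?F q r)"
    by (rule half_sum) (auto simp: compound2_entry_def algebra_simps W_def)
  have split: "?F q r = (if r = j then M$$(i,q) else 0) * W q r - (if r = i then M$$(j,q) else 0) * W q r
     + (if q = i then M$$(j,r) else 0) * W q r - (if q = j then M$$(i,r) else 0) * W q r" for q r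
    by (simp add: compound2_entry_def algebra_simps)
  have "(\<Sum>q<n. \<Sum>r<n. ?F q r) = (\<Sum>q<n. M$$(i,q) * W q j) - (\<Sum>q<n. M$$(j,q) * W q i)
      + (\<Sum>r<n. M$$(j,r) * W i r) - (\<Sum>r<n. M$$(i,r) * W j r)"
    unfolding split sum_subtractf sum.distrib D1[OF assms(1)] D1[OF assms(2)] D2[OF assms(1)] D2[OF assms(2)]
    by simp
  also have "\<dots> = 2 * ((\<Sum>q<n. M$$(i,q)*x q) * y j - x j * (\<Sum>q<n. M$$(i,q)*y q)
      + x i * (\<Sum>q<n. M$$(j,q)*y q) - (\<Sum>q<n. M$$(j,q)*x q) * y i)"
    by (simp add: W_def algebra_simps sum_subtractf sum_distrib_left sum_distrib_right sum.distrib)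
  finally show ?thesis using h by (simp add: W_def)
qed

lemma pick_img: assumes sm: "strict_mono_on {..<m} f"
  shows "i < m \<Longrightarrow> pick (f ` {..<m}) i = f i"
proof (induction i)
  case 0
  show ?case unfolding pick.simps
  proof (rule Least_equality)
    show "f 0 \<in> f ` {..<m}" using 0 by auto
    fix y assume "y \<in> f ` {..<m}"
    then obtain j where j: "j < m" "y = f j" by auto
    show "f 0 \<le> y" using strict_mono_on_leD[OF sm, of 0 j] j 0 by simp
  qed
next
  case (Suc i)
  then have IH: "pick (f ` {..<m}) i = f i" by simp
  show ?case unfolding pick.simps IH
  proof (rule Least_equality)
    have "f i < f (Suc i)" using strict_mono_onD[OF sm, of i "Suc i"] Suc.prems by simp
    then show "f (Suc i) \<in> f ` {..<m} \<and> f i < f (Suc i)" using Suc.prems by auto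
    fix y assume "y \<in> f ` {..<m} \<and> f i < y"
    then obtain k where k: "k < m" "y = f k" "f i < f k" by auto
    have "i < k"
    proof (rule ccontr)
      assume "\<not> i < k" then have "k \<le> i" by simp
      then have "f k \<le> f i" using strict_mono_on_leD[OF sm, of k i] k Suc.prems by simp
      then show False using k by simp
    qed
    then show "f (Suc i) \<le> y" using strict_mono_on_leD[OF sm, of "Suc i" k] k Suc.prems by simp
  qed
qed

lemma P0_to: assumes "P0_matrix A" "A \<in> carrier_mat N N" shows "P0' A N"
  unfolding P0'_def
proof (intro allI impI)
  fix m :: nat and f :: "nat \<Rightarrow> nat" assume m: "0 < m" and sm: "strict_mono_on {..<m} f" and im: "f ` {..<m} \<subseteq> {..<N}"
  let ?I = "f ` {..<m}"
  have inj: "inj_on f {..<m}"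
    unfolding inj_on_def
  proof (intro ballI impI)
    fix a b assume a: "a \<in> {..<m}" and b: "b \<in> {..<m}" and e: "f a = f b"
    show "a = b"
    proof (rule ccontr)
      assume "a \<noteq> b"
      then have "a < b \<or> b < a" by arith
      moreover have "a < b \<Longrightarrow> f a < f b" by (rule strict_mono_onD[OF sm a b])
      moreover have "b < a \<Longrightarrow> f b < f a" by (rule strict_mono_onD[OF sm b a])
      ultimately show False using e by auto
    qed
  qed
  have card: "card {i. i < dim_row A \<and> i \<in> ?I} = m"
  proof -
    have "{i. i < dim_row A \<and> i \<in> ?I} = ?I" using im assms(2) by auto
    then show ?thesis using card_image[OF inj] by simp
  qed
  have card2: "card {i. i < dim_col A \<and> i \<in> ?I} = m"
    using card assms(2) by simp
  have "submatrix A ?I ?I = Xm A m f (\<lambda>_. 0)"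
  proof (rule eq_matI)
    show "dim_row (submatrix A ?I ?I) = dim_row (Xm A m f (\<lambda>_. 0))" by (simp add: dim_submatrix card Xm_def)
    show "dim_col (submatrix A ?I ?I) = dim_col (Xm A m f (\<lambda>_. 0))" by (simp add: dim_submatrix card2 Xm_def)
    fix i j assume i: "i < dim_row (Xm A m f (\<lambda>_. 0))" and j: "j < dim_col (Xm A m f (\<lambda>_. 0))"
    then have i': "i < m" and j': "j < m" by (simp_all add: Xm_def)
    have "submatrix A ?I ?I $$ (i, j) = A $$ (pick ?I i, pick ?I j)"
      by (rule submatrix_index) (use i' j' card card2 in simp_all)
    also have "\<dots> = A $$ (f i, f j)" using pick_img[OF sm i'] pick_img[OF sm j'] by simp
    also have "\<dots> = Xm A m f (\<lambda>_. 0) $$ (i, j)" using i' j' by (simp add: Xm_def)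
    finally show "submatrix A ?I ?I $$ (i, j) = Xm A m f (\<lambda>_. 0) $$ (i, j)" .
  qed
  moreover have "det (submatrix A ?I ?I) \<ge> 0"
  proof -
    have s: "?I \<subseteq> {0..<dim_row A}" using im assms(2) by auto
    have ne: "?I \<noteq> {}" using m by auto
    have "\<forall>I. I \<subseteq> {0..<dim_row A} \<longrightarrow> I \<noteq> {} \<longrightarrow> det (submatrix A I I) \<ge> 0"
      using assms(1) unfolding P0_matrix_def by blast
    then show ?thesis using s ne by blast
  qed
  ultimately show "det (Xm A m f (\<lambda>_. 0)) \<ge> 0" by simp
qed

lemma no_neg_eig: assumes "P0_matrix C" "C \<in> carrier_mat N N" "w \<in> carrier_vec N" "w \<noteq> 0\<^sub>v N"
  "C *\<^sub>v w = c \<cdot>\<^sub>v w" "c < 0"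
  shows False
proof -
  have P: "P0' C N" by (rule P0_to[OF assms(1,2)])
  let ?B = "Xm C N id (\<lambda>_. - c)"
  have "det ?B > 0" using Spos[OF P, of N id "\<lambda>_. - c"] assms(6) by (auto simp: strict_mono_on_def)
  moreover have "?B *\<^sub>v w = 0\<^sub>v N"
  proof (rule eq_vecI)
    fix i assume i: "i < dim_vec (0\<^sub>v N :: real vec)"
    then have i: "i < N" by simp
    have "(C *\<^sub>v w) $ i = (c \<cdot>\<^sub>v w) $ i" using assms(5) by simp
    also have "\<dots> = c * w $ i" using i assms(3) by simp
    finally have "(C *\<^sub>v w) $ i = c * w $ i" .
    then have e: "(\<Sum>j<N. C $$ (i,j) * w $ j) = c * w $ i"
      using i assms(2,3) by (simp add: scalar_prod_def atLeast0LessThan)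
    have "(?B *\<^sub>v w) $ i = (\<Sum>j<N. (C $$ (i,j) + (if i = j then - c else 0)) * w $ j)"
      using i assms(3) by (simp add: Xm_def scalar_prod_def atLeast0LessThan)
    also have "\<dots> = (\<Sum>j<N. C $$ (i,j) * w $ j) + (\<Sum>j<N. (if i = j then - c * w $ j else 0))"
    proof -
      have pw: "(C $$ (i,j) + (if i = j then - c else 0)) * w $ j = C $$ (i,j) * w $ j + (if i = j then - c * w $ j else 0)" for j
        by (auto simp: algebra_simps)
      show ?thesis by (simp only: pw sum.distrib)
    qed
    also have "\<dots> = 0" using e i by simp
    finally show "(?B *\<^sub>v w) $ i = 0\<^sub>v N $ i" using i by simp
  qed (simp add: Xm_def)
  ultimately show False using det_0_iff_vec_prod_zero[OF Xm_carrier[of C N id "\<lambda>_. - c"]] assms(3,4) by auto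
qed

lemma indep:
  fixes M :: "real mat" and x y :: "nat \<Rightarrow> real"
  assumes b: "b \<noteq> 0"
    and Rx: "\<And>i. i < n \<Longrightarrow> (\<Sum>q<n. M$$(i,q) * x q) = a * x i - b * y i"
    and Ry: "\<And>i. i < n \<Longrightarrow> (\<Sum>q<n. M$$(i,q) * y q) = a * y i + b * x i"
    and nz: "\<exists>i<n. x i \<noteq> 0 \<or> y i \<noteq> 0"
  shows "\<exists>p q. p < q \<and> q < n \<and> x p * y q - x q * y p \<noteq> 0"
proof (rule ccontr)
  assume "\<not> ?thesis"
  then have W0: "x p * y q = x q * y p" if "p < n" "q < n" for p q
    using that by (cases "p < q"; cases "q < p") (auto simp: algebra_simps)
  show False
  proof (cases "\<forall>i<n. x i = 0")
    case True
    have "y i = 0" if "i < n" for i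
    proof -
      have "(\<Sum>q<n. M$$(i,q) * x q) = 0" using True by simp
      then have "b * y i = 0" using Rx[OF that] True that by simp
      then show ?thesis using b by simp
    qed
    then show False using nz True by auto
  next
    case False
    then obtain p where p: "p < n" "x p \<noteq> 0" by auto
    define c where "c = y p / x p"
    have yc: "y q = c * x q" if "q < n" for q
      using W0[OF p(1) that] p(2) by (simp add: c_def field_simps)
    have "(\<Sum>q<n. M$$(p,q) * y q) = (\<Sum>q<n. c * (M$$(p,q) * x q))"
      by (intro sum.cong) (auto simp: yc)
    also have "\<dots> = c * (\<Sum>q<n. M$$(p,q) * x q)" by (simp add: sum_distrib_left)
    finally have "(\<Sum>q<n. M$$(p,q) * y q) = c * (\<Sum>q<n. M$$(p,q) * x q)" .
    then have "a * y p + b * x p = c * (a * x p - b * y p)" using Rx[OF p(1)] Ry[OF p(1)] by simp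
    then have "a * (c * x p) + b * x p = c * (a * x p - b * (c * x p))" using yc[OF p(1)] by simp
    then have "b * x p * (1 + c^2) = 0" by (simp add: algebra_simps power2_eq_square)
    moreover have "1 + c^2 \<noteq> 0" using zero_le_power2[of c] by linarith
    ultimately show False using b p(2) by simp
  qed
qed

lemma main_eig:
  fixes M :: "real mat"
  assumes M: "M \<in> carrier_mat n n" and ev: "eigenvalue (map_mat complex_of_real M) z" and im: "Im z \<noteq> 0"
  shows "\<exists>w. w \<in> carrier_vec (length (pairs2 n)) \<and> w \<noteq> 0\<^sub>v (length (pairs2 n))
     \<and> compound2 M *\<^sub>v w = (2 * Re z) \<cdot>\<^sub>v w"
proof -
  let ?Mc = "map_mat complex_of_real M"
  obtain v where v: "v \<in> carrier_vec n" "v \<noteq> 0\<^sub>v n" "?Mc *\<^sub>v v = z \<cdot>\<^sub>v v"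
    using ev M unfolding eigenvalue_def eigenvector_def by auto
  define x where "x i = Re (v $ i)" for i
  define y where "y i = Im (v $ i)" for i
  define a where "a = Re z"
  define b where "b = Im z"
  have cv: "(\<Sum>q<n. complex_of_real (M$$(i,q)) * v $ q) = z * v $ i" if i: "i < n" for i
  proof -
    have "(?Mc *\<^sub>v v) $ i = (z \<cdot>\<^sub>v v) $ i" using v(3) by simp
    then show ?thesis using i M v(1) by (simp add: scalar_prod_def atLeast0LessThan)
  qed
  have Rx: "(\<Sum>q<n. M$$(i,q) * x q) = a * x i - b * y i" if i: "i < n" for i
    using arg_cong[OF cv[OF i], of Re] by (simp add: Re_sum x_def y_def a_def b_def)
  have Ry: "(\<Sum>q<n. M$$(i,q) * y q) = a * y i + b * x i" if i: "i < n" for i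
    using arg_cong[OF cv[OF i], of Im] by (simp add: Im_sum x_def y_def a_def b_def algebra_simps)
  have nz: "\<exists>i<n. x i \<noteq> 0 \<or> y i \<noteq> 0"
  proof (rule ccontr)
    assume "\<not> ?thesis"
    then have "v = 0\<^sub>v n" using v(1) by (intro eq_vecI) (auto simp: x_def y_def complex_eq_iff)
    then show False using v(2) by simp
  qed
  have "\<exists>p q. p < q \<and> q < n \<and> x p * y q - x q * y p \<noteq> 0"
    by (rule indep[OF _ Rx Ry nz]) (use im b_def in simp)
  then obtain p q where pq: "p < q" "q < n" "x p * y q - x q * y p \<noteq> 0"
    by blast
  define P where "P = pairs2 n"
  define L where "L = length P"
  define W where "W = (\<lambda>(q,r). x q * y r - x r * y q)"
  define w where "w = vec L (\<lambda>l. W (P ! l))"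
  have dimM: "dim_row M = n" using M by simp
  have C: "compound2 M = mat L L (\<lambda>(k, l). compound2_entry M (P ! k) (P ! l))"
    unfolding compound2_def dimM P_def L_def Let_def by simp
  have "(p,q) \<in> set P" using pq unfolding P_def set_pairs2 by auto
  then obtain l where l: "l < L" "P ! l = (p,q)" unfolding L_def by (metis in_set_conv_nth)
  have wnz: "w \<noteq> 0\<^sub>v L"
  proof
    assume "w = 0\<^sub>v L"
    then have "w $ l = 0" using l by simp
    then show False using l pq unfolding w_def W_def by simp
  qed
  have eig: "compound2 M *\<^sub>v w = (2 * a) \<cdot>\<^sub>v w"
  proof (rule eq_vecI)
    fix k assume "k < dim_vec ((2 * a) \<cdot>\<^sub>v w)"
    then have k: "k < L" unfolding w_def by simp
    then have "P ! k \<in> set P" unfolding L_def by simp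
    then obtain i j where ij: "P ! k = (i,j)" "i < j" "j < n" unfolding P_def set_pairs2 by auto
    have "i < n" using ij by simp
    have "(compound2 M *\<^sub>v w) $ k = (\<Sum>l<L. compound2_entry M (P ! k) (P ! l) * W (P ! l))"
      using k unfolding C w_def by (simp add: scalar_prod_def atLeast0LessThan)
    also have "\<dots> = (\<Sum>q<n. \<Sum>r\<in>{Suc q..<n}. compound2_entry M (i,j) (q,r) * (x q * y r - x r * y q))"
      using sum_pairs2[of "\<lambda>pr. compound2_entry M (P ! k) pr * W pr" n] unfolding L_def P_def ij
      by (simp add: W_def ij[unfolded P_def])
    also have "\<dots> = (\<Sum>q<n. M$$(i,q)*x q) * y j - x j * (\<Sum>q<n. M$$(i,q)*y q)
      + x i * (\<Sum>q<n. M$$(j,q)*y q) - (\<Sum>q<n. M$$(j,q)*x q) * y i"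
      using ij by (intro compound_calc) auto
    also have "\<dots> = 2 * a * (x i * y j - x j * y i)"
      unfolding Rx[OF \<open>i < n\<close>] Ry[OF \<open>i < n\<close>] Rx[OF \<open>j < n\<close>] Ry[OF \<open>j < n\<close>]
      by (simp add: algebra_simps)
    also have "\<dots> = ((2 * a) \<cdot>\<^sub>v w) $ k" using k ij unfolding w_def W_def by simp
    finally show "(compound2 M *\<^sub>v w) $ k = ((2 * a) \<cdot>\<^sub>v w) $ k" .
  qed (simp add: C w_def)
  have "w \<in> carrier_vec L" by (simp add: w_def)
  then show ?thesis using eig wnz unfolding a_def L_def P_def by (intro exI[of _ w] conjI)
qed

theorem lemma2p4:
  fixes M :: "real mat" and n :: nat
  assumes "M \<in> carrier_mat n n" and "n \<ge> 2"
  shows "(P0_matrix (compound2 M) \<longrightarrow>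
           (\<forall>z. eigenvalue (map_mat complex_of_real M) z \<and> Im z \<noteq> 0 \<longrightarrow> \<not> Re z < 0))
       \<and> (P0_matrix (- compound2 M) \<longrightarrow>
           (\<forall>z. eigenvalue (map_mat complex_of_real M) z \<and> Im z \<noteq> 0 \<longrightarrow> \<not> Re z > 0))"
proof -
  let ?L = "length (pairs2 n)"
  have Cc: "compound2 M \<in> carrier_mat ?L ?L" using assms(1) by (simp add: compound2_def Let_def)
  show ?thesis
  proof (intro conjI impI allI notI)
    fix z assume P: "P0_matrix (compound2 M)"
      and h: "eigenvalue (map_mat complex_of_real M) z \<and> Im z \<noteq> 0" and neg: "Re z < 0"
    obtain w where w: "w \<in> carrier_vec ?L" "w \<noteq> 0\<^sub>v ?L" "compound2 M *\<^sub>v w = (2 * Re z) \<cdot>\<^sub>v w"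
      using main_eig[OF assms(1)] h by blast
    show False by (rule no_neg_eig[OF P Cc w]) (use neg in simp)
  next
    fix z assume P: "P0_matrix (- compound2 M)"
      and h: "eigenvalue (map_mat complex_of_real M) z \<and> Im z \<noteq> 0" and pos: "Re z > 0"
    obtain w where w: "w \<in> carrier_vec ?L" "w \<noteq> 0\<^sub>v ?L" "compound2 M *\<^sub>v w = (2 * Re z) \<cdot>\<^sub>v w"
      using main_eig[OF assms(1)] h by blast
    have Cn: "- compound2 M \<in> carrier_mat ?L ?L" using Cc by simp
    have "(- compound2 M) *\<^sub>v w = (- (2 * Re z)) \<cdot>\<^sub>v w"
      using w Cc by (auto intro!: eq_vecI)
    then show False by (intro no_neg_eig[OF P Cn w(1,2)]) (use pos in simp)+
  qed
qed

end
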